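(* Let $G$ be a finite group, $A_0=\operatorname{Aut}(G)$, and let $S_0$ be an $\mathcal{L}(A_0)$-system over $G$ in the variables $Y=\{y_{ij}\mid i\in\mathbb{Z},1\le j\le n\}$. Then for every finite $Z\subseteq Y$ there exists a finite subsystem $S_1\subseteq S_0$ which is $Z$-equivalent to $S_0$.
   Context: $\mathcal{L}(A_0)$ is the group language $\{\cdot,{}^{-1},1\}$ with a unary function symbol for each $\phi\in A_0$, interpreted as $\phi$; an $\mathcal{L}(A_0)$-equation in $Y$ is $t=1$ for a term $t$ involving finitely many variables of $Y$, a system is any set of such equations, and its solution set $V_G(S)$ consists of the points $(p_{ij}\mid i\in\mathbb{Z},1\le j\le n)\in G^{Y}$ satisfying all its equations. Two systems $S_0,S_1$ in variables $Y$ are $Z$-equivalent ($Z\subseteq Y$) if the projections of $V_G(S_0)$ and $V_G(S_1)$ onto the coordinates in $Z$ coincide. *)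

theory Defs
  imports "HOL-Algebra.Bij" "HOL-Library.FuncSet"
begin

text \<open>Terms of the language L(A0): group language {mult, inv, 1} plus unary
  function symbols of type 'f (later instantiated by automorphisms).\<close>

datatype ('v, 'f) lterm =
    LVar 'v
  | LOne
  | LMul "('v, 'f) lterm" "('v, 'f) lterm"
  | LInv "('v, 'f) lterm"
  | LApp 'f "('v, 'f) lterm"

fun lvars :: "('v, 'f) lterm \<Rightarrow> 'v set" where
  "lvars (LVar v) = {v}"
| "lvars LOne = {}"
| "lvars (LMul s t) = lvars s \<union> lvars t"
| "lvars (LInv t) = lvars t"
| "lvars (LApp f t) = lvars t"

fun lfuns :: "('v, 'f) lterm \<Rightarrow> 'f set" where
  "lfuns (LVar v) = {}"
| "lfuns LOne = {}"
| "lfuns (LMul s t) = lfuns s \<union> lfuns t"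
| "lfuns (LInv t) = lfuns t"
| "lfuns (LApp f t) = lfuns t"

fun leval :: "('a, 'b) monoid_scheme \<Rightarrow> ('v \<Rightarrow> 'a) \<Rightarrow> ('v, 'a \<Rightarrow> 'a) lterm \<Rightarrow> 'a" where
  "leval G p (LVar v) = p v"
| "leval G p LOne = \<one>\<^bsub>G\<^esub>"
| "leval G p (LMul s t) = leval G p s \<otimes>\<^bsub>G\<^esub> leval G p t"
| "leval G p (LInv t) = inv\<^bsub>G\<^esub> (leval G p t)"
| "leval G p (LApp f t) = f (leval G p t)"

text \<open>Variables Y = {y_ij | i \<in> Z, 1 \<le> j \<le> n}, y_ij represented as (i, j).\<close>
definition Yvars :: "nat \<Rightarrow> (int \<times> nat) set" where
  "Yvars n = {(i, j). 1 \<le> j \<and> j \<le> n}"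

text \<open>An L(A0)-system in the variables Y: a set of terms (each equation t = 1 is
  represented by t) using only variables from Y and function symbols from A0.\<close>
definition is_system :: "('a \<Rightarrow> 'a) set \<Rightarrow> 'v set \<Rightarrow> ('v, 'a \<Rightarrow> 'a) lterm set \<Rightarrow> bool" where
  "is_system A0 Y S \<longleftrightarrow> (\<forall>t\<in>S. lvars t \<subseteq> Y \<and> lfuns t \<subseteq> A0)"

definition solset :: "('a, 'b) monoid_scheme \<Rightarrow> 'v set \<Rightarrow> ('v, 'a \<Rightarrow> 'a) lterm set \<Rightarrow> ('v \<Rightarrow> 'a) set" where
  "solset G Y S = {p \<in> Y \<rightarrow>\<^sub>E carrier G. \<forall>t\<in>S. leval G p t = \<one>\<^bsub>G\<^esub>}"

definition Z_equivalent :: "('a, 'b) monoid_scheme \<Rightarrow> 'v set \<Rightarrow> 'v set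
    \<Rightarrow> ('v, 'a \<Rightarrow> 'a) lterm set \<Rightarrow> ('v, 'a \<Rightarrow> 'a) lterm set \<Rightarrow> bool" where
  "Z_equivalent G Y Z S0 S1 \<longleftrightarrow>
     (\<lambda>p. restrict p Z) ` solset G Y S0 = (\<lambda>p. restrict p Z) ` solset G Y S1"

end

theory Submission
  imports Defs "HOL-Analysis.Analysis"
begin

definition LC :: "'x topology \<Rightarrow> ('x \<Rightarrow> 'y) \<Rightarrow> bool" where
  "LC X f \<longleftrightarrow> (\<forall>y. openin X {x \<in> topspace X. f x = y})"

lemma LC_const: "LC X (\<lambda>x. c)"
  unfolding LC_def
proof
  fix y show "openin X {x \<in> topspace X. c = y}"
    by (cases "c = y") auto
qed

lemma LC_comp: assumes "LC X f" shows "LC X (\<lambda>x. h (f x))"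
  unfolding LC_def
proof
  fix y
  have "{x \<in> topspace X. h (f x) = y} = (\<Union>a\<in>{a. h a = y}. {x \<in> topspace X. f x = a})"
    by auto
  then show "openin X {x \<in> topspace X. h (f x) = y}"
    using assms unfolding LC_def by auto
qed

lemma LC_comp2: assumes "LC X f" "LC X g" shows "LC X (\<lambda>x. h (f x) (g x))"
  unfolding LC_def
proof
  fix y
  have "{x \<in> topspace X. h (f x) (g x) = y} =
     (\<Union>ab\<in>{ab. h (fst ab) (snd ab) = y}. {x \<in> topspace X. f x = fst ab} \<inter> {x \<in> topspace X. g x = snd ab})"
    by auto
  moreover have "openin X (\<Union>ab\<in>{ab. h (fst ab) (snd ab) = y}. {x \<in> topspace X. f x = fst ab} \<inter> {x \<in> topspace X. g x = snd ab})"
    using assms unfolding LC_def by (intro openin_Union) auto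
  ultimately show "openin X {x \<in> topspace X. h (f x) (g x) = y}" by simp
qed

lemma LC_closed: assumes "LC X f" shows "closedin X {x \<in> topspace X. f x = y}"
proof -
  have "topspace X - {x \<in> topspace X. f x = y} = (\<Union>a\<in>{a. a \<noteq> y}. {x \<in> topspace X. f x = a})"
    by auto
  moreover have "openin X (\<Union>a\<in>{a. a \<noteq> y}. {x \<in> topspace X. f x = a})"
    using assms unfolding LC_def by auto
  ultimately show ?thesis unfolding closedin_def by auto
qed

lemma LC_proj:
  "LC (product_topology (\<lambda>_. discrete_topology C) Y) (\<lambda>p. p v)"
proof (cases "v \<in> Y")
  case True
  show ?thesis unfolding LC_def
  proof
    fix y
    have "openin (product_topology (\<lambda>_. discrete_topology C) Y)
      {x \<in> topspace (product_topology (\<lambda>_. discrete_topology C) Y). x v \<in> {y} \<inter> C}"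
      by (rule openin_continuous_map_preimage[OF continuous_map_product_projection[OF True]]) auto
    moreover have "{x \<in> topspace (product_topology (\<lambda>_. discrete_topology C) Y). x v \<in> {y} \<inter> C}
      = {x \<in> topspace (product_topology (\<lambda>_. discrete_topology C) Y). x v = y}"
      using True by (auto simp: PiE_iff)
    ultimately show "openin (product_topology (\<lambda>_. discrete_topology C) Y)
      {x \<in> topspace (product_topology (\<lambda>_. discrete_topology C) Y). x v = y}" by simp
  qed
next
  case False
  have "LC (product_topology (\<lambda>_. discrete_topology C) Y) (\<lambda>p. undefined)" by (rule LC_const)
  moreover have "\<And>p. p \<in> topspace (product_topology (\<lambda>_. discrete_topology C) Y) \<Longrightarrow> p v = undefined"
    using False by (auto simp: PiE_iff extensional_def)
  then have "\<And>y. {x \<in> topspace (product_topology (\<lambda>_. discrete_topology C) Y). x v = y}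
     = {x \<in> topspace (product_topology (\<lambda>_. discrete_topology C) Y). undefined = y}" by (metis (no_types, lifting))
  ultimately show ?thesis unfolding LC_def by simp
qed

lemma LC_leval:
  "LC (product_topology (\<lambda>_. discrete_topology C) Y) (\<lambda>p. leval G p t)"
  by (induction t) (auto intro: LC_const LC_comp LC_comp2 LC_proj)

lemma solset_anti: "S1 \<subseteq> S0 \<Longrightarrow> solset G Y S0 \<subseteq> solset G Y S1"
  unfolding solset_def by auto

theorem lemma3:
  fixes G :: "('a, 'b) monoid_scheme" and n :: nat
    and S0 :: "(int \<times> nat, 'a \<Rightarrow> 'a) lterm set"
  assumes "group G" and "finite (carrier G)"
    and "is_system (auto G) (Yvars n) S0"
  shows "\<forall>Z. finite Z \<and> Z \<subseteq> Yvars n \<longrightarrow>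
           (\<exists>S1. finite S1 \<and> S1 \<subseteq> S0 \<and> Z_equivalent G (Yvars n) Z S0 S1)"
proof (intro allI impI)
  fix Z assume Z: "finite Z \<and> Z \<subseteq> Yvars n"
  define Y where "Y = Yvars n"
  define X where "X = product_topology (\<lambda>_::int\<times>nat. discrete_topology (carrier G)) Y"
  have top: "topspace X = Y \<rightarrow>\<^sub>E carrier G" unfolding X_def by simp
  have cpt: "compact_space X" unfolding X_def
    using assms(2) by (simp add: compact_space_product_topology compact_space_discrete_topology)
  define proj where "proj = (\<lambda>p::int\<times>nat\<Rightarrow>'a. restrict p Z)"
  define bad where "bad = (Z \<rightarrow>\<^sub>E carrier G) - proj ` solset G Y S0"
  define Ct where "Ct = (\<lambda>t. {p \<in> topspace X. leval G p t = \<one>\<^bsub>G\<^esub>})"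
  define Dz where "Dz = (\<lambda>q z. {p \<in> topspace X. p z = (q::int\<times>nat\<Rightarrow>'a) z})"
  have finbad: "finite bad" unfolding bad_def using Z assms(2) by (simp add: finite_PiE)
  have "\<exists>Sq. finite Sq \<and> Sq \<subseteq> S0 \<and>
      (\<forall>p \<in> solset G Y Sq. proj p \<noteq> q)" if q: "q \<in> bad" for q
  proof -
    define U where "U = insert (topspace X) (Ct ` S0 \<union> Dz q ` Z)"
    have closed: "\<forall>C\<in>U. closedin X C"
      unfolding U_def Ct_def Dz_def
    proof (intro ballI)
      fix C assume "C \<in> insert (topspace X) ((\<lambda>t. {p \<in> topspace X. leval G p t = \<one>\<^bsub>G\<^esub>}) ` S0 \<union>
             (\<lambda>z. {p \<in> topspace X. p z = q z}) ` Z)"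
      then consider "C = topspace X" | t where "C = {p \<in> topspace X. leval G p t = \<one>\<^bsub>G\<^esub>}"
        | z where "C = {p \<in> topspace X. p z = q z}" by blast
      then show "closedin X C"
      proof cases
        case 1 then show ?thesis by simp
      next
        case 2 then show ?thesis unfolding X_def by (simp only: LC_closed[OF LC_leval])
      next
        case 3 then show ?thesis unfolding X_def by (simp only: LC_closed[OF LC_proj])
      qed
    qed
    have empty: "\<Inter>U = {}"
    proof (rule ccontr)
      assume "\<Inter>U \<noteq> {}"
      then obtain p where p: "p \<in> \<Inter>U" by blast
      then have pt: "p \<in> Y \<rightarrow>\<^sub>E carrier G" unfolding U_def top by auto
      have "p \<in> Ct t" if "t \<in> S0" for t using p that unfolding U_def by blast
      then have "p \<in> solset G Y S0" using pt unfolding Ct_def solset_def by blast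
      moreover have "proj p = q"
      proof
        fix z
        have qe: "q \<in> extensional Z" using q unfolding bad_def by (auto simp: PiE_iff)
        show "proj p z = q z"
        proof (cases "z \<in> Z")
          case True
          then have "p \<in> Dz q z" using p unfolding U_def by blast
          then show ?thesis using True unfolding Dz_def proj_def by simp
        next
          case False
          have "q z = undefined" by (rule extensional_arb[OF qe False])
          moreover have "proj p z = undefined" unfolding proj_def using False by simp
          ultimately show ?thesis by simp
        qed
      qed
      ultimately have "q \<in> proj ` solset G Y S0" by (metis image_eqI)
      then show False using q unfolding bad_def by blast
    qed
    obtain F where F: "finite F" "F \<subseteq> U" "\<Inter>F = {}"
    proof -
      have fip: "(\<forall>C\<in>U. closedin X C) \<and> (\<forall>\<F>. finite \<F> \<and> \<F> \<subseteq> U \<longrightarrow> \<Inter>\<F> \<noteq> {}) \<longrightarrow> \<Inter>U \<noteq> {}"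
        using cpt unfolding compact_space_fip by (rule spec)
      have "\<not> (\<forall>\<F>. finite \<F> \<and> \<F> \<subseteq> U \<longrightarrow> \<Inter>\<F> \<noteq> {})"
        using fip closed empty by (simp only: simp_thms not_True_eq_False) (meson)
      then show ?thesis using that by blast
    qed
    have "F \<inter> Ct ` S0 \<subseteq> Ct ` S0" "finite (F \<inter> Ct ` S0)" using F by auto
    then obtain Sq where Sq: "Sq \<subseteq> S0" "finite Sq" "F \<inter> Ct ` S0 = Ct ` Sq"
      by (metis finite_subset_image)
    have "proj p \<noteq> q" if p: "p \<in> solset G Y Sq" for p
    proof
      assume pq: "proj p = q"
      have "p \<in> \<Inter>F"
      proof
        fix C assume C: "C \<in> F"
        have pt: "p \<in> topspace X" using p unfolding solset_def top by auto
        from C F(2) consider "C = topspace X" | "C \<in> F \<inter> Ct ` S0" | z where "z \<in> Z" "C = Dz q z"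
          unfolding U_def by auto
        then show "p \<in> C"
        proof cases
          case 1 then show ?thesis using pt by simp
        next
          case 2 then obtain t where "t \<in> Sq" "C = Ct t" using Sq(3) by auto
          then show ?thesis using p pt unfolding Ct_def solset_def by auto
        next
          case 3 then show ?thesis using pt pq unfolding Dz_def proj_def by auto
        qed
      qed
      then show False using F(3) by simp
    qed
    then show ?thesis using Sq by blast
  qed
  then obtain Sf where Sf: "\<And>q. q \<in> bad \<Longrightarrow> finite (Sf q) \<and> Sf q \<subseteq> S0 \<and>
      (\<forall>p \<in> solset G Y (Sf q). proj p \<noteq> q)" by metis
  define S1 where "S1 = (\<Union>q\<in>bad. Sf q)"
  have S1: "finite S1" "S1 \<subseteq> S0" unfolding S1_def using Sf finbad by auto
  have "proj ` solset G Y S0 = proj ` solset G Y S1"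
  proof
    show "proj ` solset G Y S0 \<subseteq> proj ` solset G Y S1"
      using solset_anti[OF S1(2)] by auto
  next
    show "proj ` solset G Y S1 \<subseteq> proj ` solset G Y S0"
    proof
      fix q assume "q \<in> proj ` solset G Y S1"
      then obtain p where p: "p \<in> solset G Y S1" "q = proj p" by auto
      have qZ: "q \<in> Z \<rightarrow>\<^sub>E carrier G"
        using p Z unfolding solset_def proj_def Y_def by (auto simp: PiE_iff)
      show "q \<in> proj ` solset G Y S0"
      proof (rule ccontr)
        assume "q \<notin> proj ` solset G Y S0"
        then have qb: "q \<in> bad" using qZ unfolding bad_def by auto
        have "Sf q \<subseteq> S1" using qb unfolding S1_def by auto
        then have "p \<in> solset G Y (Sf q)" using solset_anti p(1) by blast
        then show False using Sf[OF qb] p(2) by auto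
      qed
    qed
  qed
  then show "\<exists>S1. finite S1 \<and> S1 \<subseteq> S0 \<and> Z_equivalent G (Yvars n) Z S0 S1"
    using S1 unfolding Z_equivalent_def proj_def Y_def by blast
qed

end
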